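(* Let $R$ be a unital associative ring and $$A=\begin{pmatrix}1&1&1\\1&a&b\\1&c&d\end{pmatrix}\in M_3(R).$$ Then all $1\times1$ and $2\times2$ submatrices of $A$ are invertible if and only if the elements $a,b,c,d,a-1,b-1,c-1,d-1,d-c,d-b,c-a,b-a$ and $db^{-1}-ca^{-1}$ are invertible in $R$. Furthermore, if all $1\times1$ and $2\times2$ submatrices of $A$ are invertible, then $$A\text{ is invertible}\iff (d-c)^{-1}(c-1)-(b-a)^{-1}(a-1)\in R^*,$$ $$J_2(A)\text{ is invertible}\iff (c-1)(d-c)^{-1}d-(a-1)(b-a)^{-1}b\in R^*.$$ In particular, $A\in\widehat{\cal S}$ if and only if the $15$ elements $a,b,c,d,a-1,b-1,c-1,d-1,d-c,d-b,c-a,b-a,db^{-1}-ca^{-1}$, $(d-c)^{-1}(c-1)-(b-a)^{-1}(a-1)$ and $(c-1)(d-c)^{-1}d-(a-1)(b-a)^{-1}b$ are invertible in $R$.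
   Context: $R^*$ denotes the units of $R$. For $M\in M_3(R)$ with all entries in $R^*$, $J_2(M)$ is the matrix with $(j,k)$-entry $(M_{kj})^{-1}$. ${\cal S}=\{M\in M_3(R):$ all square submatrices of $M$ are invertible and $J_2(M)$ is invertible$\}$, $\widehat M_3(R)$ is the set of $3\times3$ matrices whose first row and column consist of $1$'s, and $\widehat{\cal S}={\cal S}\cap\widehat M_3(R)$. *)

theory Defs
  imports Main
begin

definition is_unit :: "'a::ring_1 \<Rightarrow> bool" where
  "is_unit x \<longleftrightarrow> (\<exists>y. x * y = 1 \<and> y * x = 1)"

definition uinv :: "'a::ring_1 \<Rightarrow> 'a" where
  "uinv x = (SOME y. x * y = 1 \<and> y * x = 1)"

text \<open>Square matrices of size n over R, represented as functions on indices {0..<n}.\<close>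
type_synonym 'a mat = "nat \<Rightarrow> nat \<Rightarrow> 'a"

definition mat_mul :: "nat \<Rightarrow> 'a::ring_1 mat \<Rightarrow> 'a mat \<Rightarrow> 'a mat" where
  "mat_mul n A B = (\<lambda>i j. \<Sum>k<n. A i k * B k j)"

definition mat_invertible :: "nat \<Rightarrow> 'a::ring_1 mat \<Rightarrow> bool" where
  "mat_invertible n A \<longleftrightarrow> (\<exists>B. (\<forall>i<n. \<forall>j<n. mat_mul n A B i j = (if i = j then 1 else 0))
                                 \<and> (\<forall>i<n. \<forall>j<n. mat_mul n B A i j = (if i = j then 1 else 0)))"

definition all_sub_inv :: "'a::ring_1 mat \<Rightarrow> nat \<Rightarrow> bool" where
  "all_sub_inv M k \<longleftrightarrow> (\<forall>rs cs. length rs = k \<and> length cs = k \<and>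
      sorted_wrt (<) rs \<and> sorted_wrt (<) cs \<and> set rs \<subseteq> {..<3} \<and> set cs \<subseteq> {..<3}
      \<longrightarrow> mat_invertible k (\<lambda>i j. M (rs ! i) (cs ! j)))"

definition J2 :: "'a::ring_1 mat \<Rightarrow> 'a mat" where
  "J2 M = (\<lambda>j k. uinv (M k j))"

definition S_set :: "'a::ring_1 mat set" where
  "S_set = {M. (\<forall>k\<in>{1,2,3}. all_sub_inv M k) \<and> mat_invertible 3 (J2 M)}"

definition hat_M3 :: "'a::ring_1 mat set" where
  "hat_M3 = {M. \<forall>i<3. M 0 i = 1 \<and> M i 0 = 1}"

definition hat_S :: "'a::ring_1 mat set" where
  "hat_S = S_set \<inter> hat_M3"

definition matA :: "'a::ring_1 \<Rightarrow> 'a \<Rightarrow> 'a \<Rightarrow> 'a \<Rightarrow> 'a mat" where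
  "matA a b c d = (\<lambda>i j. [[1,1,1],[1,a,b],[1,c,d]] ! i ! j)"

end

theory Submission
  imports Defs
begin

lemma unitD: assumes "is_unit (x::'a::ring_1)" shows "x * uinv x = 1" "uinv x * x = 1"
proof -
  from assms have "\<exists>y. x * y = 1 \<and> y * x = 1" by (simp add: is_unit_def)
  hence "x * uinv x = 1 \<and> uinv x * x = 1" unfolding uinv_def by (rule someI_ex)
  thus "x * uinv x = 1" "uinv x * x = 1" by auto
qed

lemma uinv_eq: assumes "(x::'a::ring_1) * y = 1" "y * x = 1" shows "uinv x = y"
proof -
  have u: "is_unit x" using assms by (auto simp: is_unit_def)
  have "uinv x = uinv x * (x * y)" using assms by simp
  also have "\<dots> = (uinv x * x) * y" by (simp add: mult.assoc)
  also have "\<dots> = y" using unitD[OF u] by simp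
  finally show ?thesis .
qed

lemma unit_1[simp]: "is_unit (1::'a::ring_1)" and uinv_1[simp]: "uinv (1::'a::ring_1) = 1"
  by (auto simp: is_unit_def intro: uinv_eq)

lemma unit_mult: assumes "is_unit (x::'a::ring_1)" "is_unit y"
  shows "is_unit (x*y)" "uinv (x*y) = uinv y * uinv x"
proof -
  have a: "(x*y) * (uinv y * uinv x) = 1"
    by (metis assms mult.assoc mult_1_left unitD)
  have b: "(uinv y * uinv x) * (x*y) = 1"
    by (metis assms mult.assoc mult_1_left unitD)
  show "is_unit (x*y)" using a b by (auto simp: is_unit_def)
  show "uinv (x*y) = uinv y * uinv x" using a b by (rule uinv_eq)
qed

lemma unit_uinv: assumes "is_unit (x::'a::ring_1)" shows "is_unit (uinv x)" "uinv (uinv x) = x"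
  using unitD[OF assms] by (auto simp: is_unit_def intro: uinv_eq)

lemma unit_neg: "is_unit (- (x::'a::ring_1)) \<longleftrightarrow> is_unit x"
  unfolding is_unit_def by (metis minus_minus mult_minus_left mult_minus_right)

lemma uinv_neg: assumes "is_unit (x::'a::ring_1)" shows "uinv (-x) = - uinv x"
  using unitD[OF assms] by (intro uinv_eq) auto

lemma unit_cancel_left: assumes "is_unit (u::'a::ring_1)" "is_unit (u * x)" shows "is_unit x"
proof -
  have "x = uinv u * (u * x)" using unitD[OF assms(1)] by (simp add: mult.assoc[symmetric])
  thus ?thesis using unit_mult(1)[OF unit_uinv(1)[OF assms(1)] assms(2)] by simp
qed

lemma unit_cancel_right: assumes "is_unit (u::'a::ring_1)" "is_unit (x * u)" shows "is_unit x"
proof -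
  have "x = (x * u) * uinv u" using unitD[OF assms(1)] by (simp add: mult.assoc)
  thus ?thesis using unit_mult(1)[OF assms(2) unit_uinv(1)[OF assms(1)]] by simp
qed

lemma unit_sandwich: assumes "is_unit (u::'a::ring_1)" "is_unit v"
  shows "is_unit (u * x * v) \<longleftrightarrow> is_unit x"
  by (meson assms unit_cancel_left unit_cancel_right unit_mult(1))

lemma inv1: "mat_invertible 1 M \<longleftrightarrow> is_unit (M 0 0)"
  unfolding mat_invertible_def mat_mul_def is_unit_def
  by auto

lemma inv2: "mat_invertible 2 M \<longleftrightarrow> (\<exists>x y z w.
   M 0 0 * x + M 0 1 * z = 1 \<and> M 0 0 * y + M 0 1 * w = 0 \<and>
   M 1 0 * x + M 1 1 * z = 0 \<and> M 1 0 * y + M 1 1 * w = 1 \<and>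
   x * M 0 0 + y * M 1 0 = 1 \<and> x * M 0 1 + y * M 1 1 = 0 \<and>
   z * M 0 0 + w * M 1 0 = 0 \<and> z * M 0 1 + w * M 1 1 = 1)"
proof -
  have e: "mat_invertible 2 M \<longleftrightarrow> (\<exists>B::nat\<Rightarrow>nat\<Rightarrow>_.
   M 0 0 * B 0 0 + M 0 1 * B 1 0 = 1 \<and> M 0 0 * B 0 1 + M 0 1 * B 1 1 = 0 \<and>
   M 1 0 * B 0 0 + M 1 1 * B 1 0 = 0 \<and> M 1 0 * B 0 1 + M 1 1 * B 1 1 = 1 \<and>
   B 0 0 * M 0 0 + B 0 1 * M 1 0 = 1 \<and> B 0 0 * M 0 1 + B 0 1 * M 1 1 = 0 \<and>
   B 1 0 * M 0 0 + B 1 1 * M 1 0 = 0 \<and> B 1 0 * M 0 1 + B 1 1 * M 1 1 = 1)"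
    unfolding mat_invertible_def mat_mul_def numeral_2_eq_2 One_nat_def
    by (intro ex_cong1) (auto simp add: All_less_Suc lessThan_Suc add.commute)
  show ?thesis unfolding e
    apply (rule iffI)
     apply blast
    apply (elim exE)
    subgoal for x y z w
      by (rule exI[where x="\<lambda>i j::nat. if i = 0 then (if j = 0 then x else y) else (if j = 0 then z else w)"]) simp
    done
qed

lemma schur2:
  fixes p q r s :: "'a::ring_1"
  assumes pu: "is_unit p"
  shows "(\<exists>x y z w.
   p * x + q * z = 1 \<and> p * y + q * w = 0 \<and>
   r * x + s * z = 0 \<and> r * y + s * w = 1 \<and>
   x * p + y * r = 1 \<and> x * q + y * s = 0 \<and>
   z * p + w * r = 0 \<and> z * q + w * s = 1) \<longleftrightarrow> is_unit (s - r * uinv p * q)"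
proof -
  define p' where "p' = uinv p"
  have pp: "p * p' = 1" "p' * p = 1" using unitD[OF pu] by (auto simp: p'_def)
  show ?thesis unfolding p'_def[symmetric]
  proof
    assume "\<exists>x y z w.
   p * x + q * z = 1 \<and> p * y + q * w = 0 \<and>
   r * x + s * z = 0 \<and> r * y + s * w = 1 \<and>
   x * p + y * r = 1 \<and> x * q + y * s = 0 \<and>
   z * p + w * r = 0 \<and> z * q + w * s = 1"
    then obtain x y z w where h: "p * y + q * w = 0" "r * y + s * w = 1"
      "z * p + w * r = 0" "z * q + w * s = 1" by blast
    have y: "y = - (p' * q * w)"
    proof -
      have "y = p' * (p * y)" using pp by (simp add: mult.assoc[symmetric])
      also have "p * y = - (q * w)" using h(1) by (simp add: eq_neg_iff_add_eq_0)
      finally show ?thesis by (simp add: mult.assoc)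
    qed
    have z: "z = - (w * r * p')"
    proof -
      have "z = (z * p) * p'" using pp by (simp add: mult.assoc)
      also have "z * p = - (w * r)" using h(3) by (simp add: eq_neg_iff_add_eq_0)
      finally show ?thesis by (simp add: mult.assoc)
    qed
    have a: "(s - r * p' * q) * w = 1" using h(2) unfolding y by (simp add: algebra_simps)
    have b: "w * (s - r * p' * q) = 1" using h(4) unfolding z by (simp add: algebra_simps)
    show "is_unit (s - r * p' * q)" using a b by (auto simp: is_unit_def)
  next
    assume u: "is_unit (s - r * p' * q)"
    define t where "t = uinv (s - r * p' * q)"
    have st: "(s - r * p' * q) * t = 1" "t * (s - r * p' * q) = 1" using unitD[OF u] by (auto simp: t_def)
    have st1: "s * t = 1 + r * p' * q * t" using st(1) by (simp add: algebra_simps)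
    have st2: "t * s = 1 + t * r * p' * q" using st(2) by (simp add: algebra_simps)
    have pp1: "\<And>X. p * (p' * X) = X" "\<And>X. p' * (p * X) = X" using pp by (simp_all add: mult.assoc[symmetric])
    define x where "x = p' + p' * q * t * r * p'"
    define y where "y = - (p' * q * t)"
    define z where "z = - (t * r * p')"
    have 1: "p * x + q * z = 1" unfolding x_def z_def by (simp add: algebra_simps pp pp1)
    have 2: "p * y + q * t = 0" unfolding y_def by (simp add: algebra_simps pp pp1)
    have 3: "r * x + s * z = 0"
    proof -
      have "r * x + s * z = r * p' - (s * t) * (r * p') + r * p' * q * t * r * p'"
        unfolding x_def z_def by (simp add: algebra_simps)
      also have "\<dots> = 0" unfolding st1 by (simp add: algebra_simps)
      finally show ?thesis .
    qed
    have 4: "r * y + s * t = 1" unfolding y_def st1 by (simp add: algebra_simps)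
    have 5: "x * p + y * r = 1" unfolding x_def y_def by (simp add: algebra_simps pp mult.assoc)
    have 6: "x * q + y * s = 0"
    proof -
      have "x * q + y * s = p' * q - (p' * q) * (t * s) + p' * q * t * r * p' * q"
        unfolding x_def y_def by (simp add: algebra_simps)
      also have "\<dots> = 0" unfolding st2 by (simp add: algebra_simps)
      finally show ?thesis .
    qed
    have 7: "z * p + t * r = 0" unfolding z_def by (simp add: algebra_simps pp mult.assoc)
    have 8: "z * q + t * s = 1" unfolding z_def st2 by (simp add: algebra_simps)
    show "\<exists>x y z w.
   p * x + q * z = 1 \<and> p * y + q * w = 0 \<and>
   r * x + s * z = 0 \<and> r * y + s * w = 1 \<and>
   x * p + y * r = 1 \<and> x * q + y * s = 0 \<and>
   z * p + w * r = 0 \<and> z * q + w * s = 1" using 1 2 3 4 5 6 7 8 by blast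
  qed
qed

lemma L2: assumes "is_unit (M 0 0)"
  shows "mat_invertible 2 M \<longleftrightarrow> is_unit (M 1 1 - M 1 0 * uinv (M 0 0) * M 0 1)"
  unfolding inv2 using schur2[OF assms] by blast

lemma solveL: "(P - 1) * X + (Q - 1) * Y = (C::'a::ring_1) \<Longrightarrow> P * X = C + X - Q * Y + Y"
proof -
  assume h: "(P - 1) * X + (Q - 1) * Y = C"
  have "P * X = ((P - 1) * X + (Q - 1) * Y) + X - Q * Y + Y" by (simp add: algebra_simps)
  thus ?thesis using h by simp
qed

lemma solveR: "X * (P - 1) + Y * (Q - 1) = (C::'a::ring_1) \<Longrightarrow> X * P = C + X - Y * Q + Y"
proof -
  assume h: "X * (P - 1) + Y * (Q - 1) = C"
  have "X * P = (X * (P - 1) + Y * (Q - 1)) + X - Y * Q + Y" by (simp add: algebra_simps)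
  thus ?thesis using h by simp
qed

lemma L3:
  fixes M :: "'a::ring_1 mat"
  assumes r0: "\<And>j. j < 3 \<Longrightarrow> M 0 j = 1" and c0: "\<And>i. i < 3 \<Longrightarrow> M i 0 = 1"
  shows "mat_invertible 3 M \<longleftrightarrow> mat_invertible 2 (\<lambda>i j. M (i+1) (j+1) - 1)"
proof -
  have m: "M 0 0 = 1" "M 0 1 = 1" "M 0 2 = 1" "M 1 0 = 1" "M 2 0 = 1" using r0 c0 by auto
  define p where "p = M 1 1"
  define q where "q = M 1 2"
  define r where "r = M 2 1"
  define s where "s = M 2 2"
  have sum3: "\<And>f. (\<Sum>k<(3::nat). f k) = f 0 + f 1 + (f 2 :: 'a)"
    by (simp add: numeral_3_eq_3 lessThan_Suc add_ac numeral_2_eq_2)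
  have all3: "\<And>P. (\<forall>i<3. P i) \<longleftrightarrow> P 0 \<and> P 1 \<and> P (2::nat)"
    by (auto simp add: numeral_3_eq_3 less_Suc_eq numeral_2_eq_2)
  have N: "mat_invertible 2 (\<lambda>i j. M (i+1) (j+1) - 1) \<longleftrightarrow> (\<exists>x y z w.
   (p - 1) * x + (q - 1) * z = 1 \<and> (p - 1) * y + (q - 1) * w = 0 \<and>
   (r - 1) * x + (s - 1) * z = 0 \<and> (r - 1) * y + (s - 1) * w = 1 \<and>
   x * (p - 1) + y * (r - 1) = 1 \<and> x * (q - 1) + y * (s - 1) = 0 \<and>
   z * (p - 1) + w * (r - 1) = 0 \<and> z * (q - 1) + w * (s - 1) = 1)"
    unfolding inv2 p_def q_def r_def s_def by (simp add: numeral_2_eq_2)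
  show ?thesis unfolding N
  proof
    assume "mat_invertible 3 M"
    then obtain B where hMB: "\<forall>i<3. \<forall>j<3. (\<Sum>k<3. M i k * B k j) = (if i = j then 1 else 0)"
      and hBM: "\<forall>i<3. \<forall>j<3. (\<Sum>k<3. B i k * M k j) = (if i = j then 1 else 0)"
      unfolding mat_invertible_def mat_mul_def by blast
    have I: "(\<Sum>k<3. M i k * B k j) = (if i = j then 1 else 0)"
            "(\<Sum>k<3. B i k * M k j) = (if i = j then 1 else 0)"
      if "i < 3" "j < 3" for i j :: nat using hMB hBM that by auto
    have a: "B 0 1 + B 1 1 + B 2 1 = 0" "B 0 2 + B 1 2 + B 2 2 = 0"
            "B 1 0 + B 1 1 + B 1 2 = 0" "B 2 0 + B 2 1 + B 2 2 = 0"
      using I(1)[of 0 1] I(1)[of 0 2] I(2)[of 1 0] I(2)[of 2 0] by (simp_all add: sum3 m m[unfolded One_nat_def])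
    have e1: "B 0 1 = - (B 1 1 + B 2 1)" "B 0 2 = - (B 1 2 + B 2 2)"
      using a by (metis add.assoc eq_neg_iff_add_eq_0)+
    have e2: "B 1 0 = - (B 1 1 + B 1 2)" "B 2 0 = - (B 2 1 + B 2 2)"
      using a by (metis add.assoc eq_neg_iff_add_eq_0)+
    have f: "B 0 1 + M 1 1 * B 1 1 + M 1 2 * B 2 1 = 1"
            "B 0 2 + M 1 1 * B 1 2 + M 1 2 * B 2 2 = 0"
            "B 0 1 + M 2 1 * B 1 1 + M 2 2 * B 2 1 = 0"
            "B 0 2 + M 2 1 * B 1 2 + M 2 2 * B 2 2 = 1"
            "B 1 0 + B 1 1 * M 1 1 + B 1 2 * M 2 1 = 1"
            "B 1 0 + B 1 1 * M 1 2 + B 1 2 * M 2 2 = 0"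
            "B 2 0 + B 2 1 * M 1 1 + B 2 2 * M 2 1 = 0"
            "B 2 0 + B 2 1 * M 1 2 + B 2 2 * M 2 2 = 1"
      using I(1)[of 1 1] I(1)[of 1 2] I(1)[of 2 1] I(1)[of 2 2]
            I(2)[of 1 1] I(2)[of 1 2] I(2)[of 2 1] I(2)[of 2 2] by (simp_all add: sum3 m m[unfolded One_nat_def])
    have g: "\<And>P Q X Y. (P - 1) * X + (Q - 1) * Y = - (X + Y) + P * X + Q * (Y::'a)"
            "\<And>P Q X Y. X * (P - 1) + Y * (Q - 1) = - (X + Y) + X * P + Y * (Q::'a)"
      by (simp_all add: algebra_simps)
    show "\<exists>x y z w.
   (p - 1) * x + (q - 1) * z = 1 \<and> (p - 1) * y + (q - 1) * w = 0 \<and>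
   (r - 1) * x + (s - 1) * z = 0 \<and> (r - 1) * y + (s - 1) * w = 1 \<and>
   x * (p - 1) + y * (r - 1) = 1 \<and> x * (q - 1) + y * (s - 1) = 0 \<and>
   z * (p - 1) + w * (r - 1) = 0 \<and> z * (q - 1) + w * (s - 1) = 1"
      apply (rule exI[where x="B 1 1"], rule exI[where x="B 1 2"], rule exI[where x="B 2 1"], rule exI[where x="B 2 2"])
      unfolding g p_def q_def r_def s_def using f[unfolded e1 e2] by simp
  next
    assume "\<exists>x y z w.
   (p - 1) * x + (q - 1) * z = 1 \<and> (p - 1) * y + (q - 1) * w = 0 \<and>
   (r - 1) * x + (s - 1) * z = 0 \<and> (r - 1) * y + (s - 1) * w = 1 \<and>
   x * (p - 1) + y * (r - 1) = 1 \<and> x * (q - 1) + y * (s - 1) = 0 \<and>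
   z * (p - 1) + w * (r - 1) = 0 \<and> z * (q - 1) + w * (s - 1) = 1"
    then obtain x y z w where h:
   "(p - 1) * x + (q - 1) * z = 1" "(p - 1) * y + (q - 1) * w = 0"
   "(r - 1) * x + (s - 1) * z = 0" "(r - 1) * y + (s - 1) * w = 1"
   "x * (p - 1) + y * (r - 1) = 1" "x * (q - 1) + y * (s - 1) = 0"
   "z * (p - 1) + w * (r - 1) = 0" "z * (q - 1) + w * (s - 1) = 1" by blast
    have o: "p * x = 1 + x - q * z + z" "p * y = y - q * w + w"
      "r * x = x - s * z + z" "r * y = 1 + y - s * w + w"
      "x * p = 1 + x - y * r + y" "x * q = x - y * s + y"
      "z * p = z - w * r + w" "z * q = 1 + z - w * s + w"
      using solveL[OF h(1)] solveL[OF h(2)] solveL[OF h(3)] solveL[OF h(4)]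
            solveR[OF h(5)] solveR[OF h(6)] solveR[OF h(7)] solveR[OF h(8)] by simp_all
    define B where "B = (\<lambda>i j. [[1 + x + y + z + w, - (x + z), - (y + w)],
                               [- (x + y), x, y], [- (z + w), z, w]] ! i ! j)"
    have MM: "M 1 1 = p" "M 1 2 = q" "M 2 1 = r" "M 2 2 = s" by (simp_all add: p_def q_def r_def s_def)
    have "(\<forall>i<3. \<forall>j<3. (\<Sum>k<3. M i k * B k j) = (if i = j then 1 else 0)) \<and>
          (\<forall>i<3. \<forall>j<3. (\<Sum>k<3. B i k * M k j) = (if i = j then 1 else 0))"
      unfolding all3 sum3 m MM B_def by (simp add: algebra_simps o)
    thus "mat_invertible 3 M" unfolding mat_invertible_def mat_mul_def by blast
  qed
qed

lemma inv_cong: assumes "\<And>i j. i < n \<Longrightarrow> j < n \<Longrightarrow> M i j = M' i j"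
  shows "mat_invertible n M \<longleftrightarrow> mat_invertible n M'"
proof -
  have eq: "mat_mul n M B i j = mat_mul n M' B i j" "mat_mul n B M i j = mat_mul n B M' i j"
    if "i < n" "j < n" for B i j
    unfolding mat_mul_def using assms that by (auto intro!: sum.cong)
  show ?thesis unfolding mat_invertible_def by (intro ex_cong1) (simp add: eq)
qed

lemma list1: "(length rs = 1 \<and> set rs \<subseteq> {..<3}) \<longleftrightarrow> (\<exists>i<3. rs = [i])"
  by (cases rs) auto

lemma list2: "(length rs = 2 \<and> sorted_wrt (<) rs \<and> set rs \<subseteq> {..<3}) \<longleftrightarrow>
   (rs = [0,1] \<or> rs = [0,2] \<or> rs = [1,(2::nat)])"
proof
  assume h: "length rs = 2 \<and> sorted_wrt (<) rs \<and> set rs \<subseteq> {..<3}"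
  then obtain x y where rs: "rs = [x,y]"
    by (metis One_nat_def Suc_1 length_0_conv length_Suc_conv)
  with h have "x < y" "y < 3" by auto
  hence "(x = 0 \<and> y = 1) \<or> (x = 0 \<and> y = 2) \<or> (x = 1 \<and> y = 2)" by auto
  thus "rs = [0,1] \<or> rs = [0,2] \<or> rs = [1,2]" using rs by auto
qed auto

lemma list3: "(length rs = 3 \<and> sorted_wrt (<) rs \<and> set rs \<subseteq> {..<3}) \<longleftrightarrow> rs = [0,1,(2::nat)]"
proof
  assume h: "length rs = 3 \<and> sorted_wrt (<) rs \<and> set rs \<subseteq> {..<3}"
  then obtain x y z where rs: "rs = [x,y,z]"
    by (metis length_0_conv length_Suc_conv numeral_3_eq_3)
  with h have "x < y" "y < z" "z < 3" by auto
  hence "x = 0 \<and> y = 1 \<and> z = 2" by auto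
  thus "rs = [0,1,2]" using rs by auto
qed auto

lemma sub1: "all_sub_inv M 1 \<longleftrightarrow> (\<forall>i<3. \<forall>j<3. is_unit (M i j))"
proof
  assume h: "all_sub_inv M 1"
  show "\<forall>i<3. \<forall>j<3. is_unit (M i j)"
  proof (intro allI impI)
    fix i j :: nat assume "i < 3" "j < 3"
    hence "mat_invertible 1 (\<lambda>k l. M ([i] ! k) ([j] ! l))" using h unfolding all_sub_inv_def
      by (metis One_nat_def empty_subsetI insert_subset lessThan_iff list.set(1) list.set(2) list.size(3) list.size(4) sorted_wrt1 add_0)
    thus "is_unit (M i j)" by (simp add: inv1[unfolded One_nat_def])
  qed
next
  assume h: "\<forall>i<3. \<forall>j<3. is_unit (M i j)"
  show "all_sub_inv M 1" unfolding all_sub_inv_def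
  proof (intro allI impI)
    fix rs cs :: "nat list"
    assume "length rs = 1 \<and> length cs = 1 \<and> sorted_wrt (<) rs \<and> sorted_wrt (<) cs \<and> set rs \<subseteq> {..<3} \<and> set cs \<subseteq> {..<3}"
    then obtain i j where "i < 3" "j < 3" "rs = [i]" "cs = [j]" using list1 by metis
    thus "mat_invertible 1 (\<lambda>k l. M (rs ! k) (cs ! l))" using h by (simp add: inv1[unfolded One_nat_def])
  qed
qed

lemma sub2: "all_sub_inv M 2 \<longleftrightarrow> (\<forall>rs\<in>{[0,1],[0,2],[1,2::nat]}. \<forall>cs\<in>{[0,1],[0,2],[1,2::nat]}.
    mat_invertible 2 (\<lambda>i j. M (rs ! i) (cs ! j)))"
  unfolding all_sub_inv_def
  by (smt (verit, best) insertCI insertE list2 singletonD)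

lemma sub3: "all_sub_inv M 3 \<longleftrightarrow> mat_invertible 3 M"
proof -
  have "all_sub_inv M 3 \<longleftrightarrow> mat_invertible 3 (\<lambda>i j. M ([0,1,2] ! i) ([0,1,2] ! j))"
    unfolding all_sub_inv_def using list3 by metis
  also have "\<dots> \<longleftrightarrow> mat_invertible 3 M"
    by (rule inv_cong) (auto simp: numeral_3_eq_3 less_Suc_eq numeral_2_eq_2)
  finally show ?thesis .
qed

lemma matA_simps[simp]:
  "matA a b c d 0 0 = 1" "matA a b c d 0 1 = 1" "matA a b c d 0 2 = 1"
  "matA a b c d 1 0 = 1" "matA a b c d 1 1 = a" "matA a b c d 1 2 = b"
  "matA a b c d 2 0 = 1" "matA a b c d 2 1 = c" "matA a b c d 2 2 = d"
  by (simp_all add: matA_def numeral_2_eq_2)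

lemma matA_simps2[simp]:
  "matA a b c d 0 (Suc 0) = 1" "matA a b c d 0 (Suc (Suc 0)) = 1"
  "matA a b c d (Suc 0) 0 = 1" "matA a b c d (Suc 0) (Suc 0) = a" "matA a b c d (Suc 0) (Suc (Suc 0)) = b"
  "matA a b c d (Suc (Suc 0)) 0 = 1" "matA a b c d (Suc (Suc 0)) (Suc 0) = c" "matA a b c d (Suc (Suc 0)) (Suc (Suc 0)) = d"
  by (simp_all add: matA_def)

lemma all3: "(\<forall>i<3. P i) \<longleftrightarrow> P 0 \<and> P 1 \<and> P (2::nat)"
  by (auto simp add: numeral_3_eq_3 less_Suc_eq numeral_2_eq_2)

lemma schurA:
  fixes D U V E A1 W B1 C1 D1 :: "'a::ring_1"
  assumes DU: "D * U = 1" and VE: "V * E = 1" and AW: "A1 * W = 1" and WA: "W * A1 = 1"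
    and E: "E = B1 - A1" and D: "D = D1 - C1"
  shows "D1 - C1 * W * B1 = - (D * (U * C1 - V * A1) * (W * E))"
proof -
  have "D * (U * C1 - V * A1) * (W * E) = (D * U) * C1 * W * E - D * (V * ((A1 * W) * E))"
    by (simp add: algebra_simps)
  also have "\<dots> = C1 * W * E - D" using DU AW VE by simp
  also have "\<dots> = C1 * W * B1 - C1 * (W * A1) - D" unfolding E by (simp add: algebra_simps)
  also have "\<dots> = C1 * W * B1 - D1" using WA D by (simp add: algebra_simps)
  finally show ?thesis by simp
qed

lemma schurJ:
  fixes p q r s f1 f2 x y :: "'a::ring_1"
  assumes pu: "is_unit p" and fu: "is_unit f1" and x: "x = p * f1" and y: "y = q * f2"
    and r: "(r - p) * f1 = 1" and s: "(s - q) * f2 = 1"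
  shows "(s - r * uinv p * q) * f2 = 1 - uinv x * y"
proof -
  have ux: "uinv x = uinv f1 * uinv p" using unit_mult(2)[OF pu fu] x by simp
  have ff: "f1 * uinv f1 = 1" using unitD[OF fu] by simp
  have pp1: "\<And>X. p * (uinv p * X) = X" using unitD[OF pu] by (simp add: mult.assoc[symmetric])
  have "1 - uinv x * y = (s - q) * f2 - ((r - p) * f1) * (uinv f1 * uinv p) * (q * f2)"
    using ux y r s by simp
  also have "\<dots> = (s - q) * f2 - (r - p) * (f1 * uinv f1) * uinv p * q * f2"
    by (simp add: mult.assoc)
  also have "\<dots> = (s - q) * f2 - (r - p) * uinv p * q * f2" by (simp add: ff)
  also have "\<dots> = (s - r * uinv p * q) * f2" by (simp add: algebra_simps pp1)
  finally show ?thesis by simp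
qed

lemma conv12: assumes "is_unit (b::'a::ring_1)"
  shows "is_unit (d - c * uinv a * b) \<longleftrightarrow> is_unit (d * uinv b - c * uinv a)"
proof -
  have "(d - c * uinv a * b) * uinv b = d * uinv b - c * uinv a"
    using unitD[OF assms] by (simp add: algebra_simps mult.assoc)
  thus ?thesis
    by (metis assms unit_cancel_right unit_mult(1) unit_uinv(1) unit_uinv(2))
qed

lemma fx:
  fixes a b v :: "'a::ring_1"
  assumes au: "is_unit a" and bu: "is_unit b" and bv: "(b - a) * v = 1"
  shows "(uinv a - 1) * (- (a * v * b)) = (a - 1) * v * b"
    and "((uinv b - 1) - (uinv a - 1)) * (- (a * v * b)) = 1"
proof -
  have aa: "uinv a * a = 1" using unitD[OF au] by simp
  have bb: "uinv b * b = 1" using unitD[OF bu] by simp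
  have 1: "(uinv a - 1) * a = 1 - a" by (simp add: algebra_simps aa)
  have "(uinv a - 1) * (- (a * v * b)) = - (((uinv a - 1) * a) * v * b)" by (simp add: mult.assoc)
  also have "\<dots> = (a - 1) * v * b" unfolding 1 by (simp add: algebra_simps)
  finally show "(uinv a - 1) * (- (a * v * b)) = (a - 1) * v * b" .
  have 2: "((uinv b - 1) - (uinv a - 1)) * a = - (uinv b * (b - a))"
    by (simp add: algebra_simps aa bb)
  have "((uinv b - 1) - (uinv a - 1)) * (- (a * v * b)) = - ((((uinv b - 1) - (uinv a - 1)) * a) * v * b)"
    by (simp add: mult.assoc)
  also have "\<dots> = uinv b * ((b - a) * v) * b" unfolding 2 by (simp add: mult.assoc)
  also have "\<dots> = 1" using bv bb by simp
  finally show "((uinv b - 1) - (uinv a - 1)) * (- (a * v * b)) = 1" .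
qed

lemma J2_unit_iff:
  fixes a b c d :: "'a::ring_1"
  assumes u: "is_unit a" "is_unit b" "is_unit c" "is_unit d" "is_unit (a - 1)"
     "is_unit (b - a)" "is_unit (d - c)" "is_unit (c - 1)"
  shows "is_unit ((uinv d - 1) - (uinv b - 1) * uinv (uinv a - 1) * (uinv c - 1)) \<longleftrightarrow>
         is_unit ((c - 1) * uinv (d - c) * d - (a - 1) * uinv (b - a) * b)"
proof -
  define v where "v = uinv (b - a)"
  define w where "w = uinv (d - c)"
  define x where "x = (a - 1) * v * b"
  define y where "y = (c - 1) * w * d"
  define f1 where "f1 = - (a * v * b)"
  define f2 where "f2 = - (c * w * d)"
  have bv: "(b - a) * v = 1" using unitD[OF u(6)] by (simp add: v_def)
  have dw: "(d - c) * w = 1" using unitD[OF u(7)] by (simp add: w_def)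
  have vu: "is_unit v" "is_unit w" using unit_uinv u by (auto simp: v_def w_def)
  have f1u: "is_unit f1" unfolding f1_def unit_neg using u vu by (intro unit_mult) auto
  have f2u: "is_unit f2" unfolding f2_def unit_neg using u vu by (intro unit_mult) auto
  have xu: "is_unit x" unfolding x_def using u vu by (intro unit_mult) auto
  have pe: "uinv a - 1 = - (uinv a * (a - 1))" using unitD[OF u(1)] by (simp add: algebra_simps)
  have pu: "is_unit (uinv a - 1)" unfolding pe unit_neg using u unit_uinv by (intro unit_mult) auto
  note A = fx[OF u(1) u(2) bv] and C = fx[OF u(3) u(4) dw]
  have key: "((uinv d - 1) - (uinv b - 1) * uinv (uinv a - 1) * (uinv c - 1)) * f2 = 1 - uinv x * y"
    apply (rule schurJ[OF pu f1u])
    unfolding x_def y_def f1_def f2_def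
       apply (rule A(1)[symmetric]) apply (rule C(1)[symmetric]) apply (rule A(2)) apply (rule C(2))
    done
  have "is_unit ((uinv d - 1) - (uinv b - 1) * uinv (uinv a - 1) * (uinv c - 1)) \<longleftrightarrow>
        is_unit (1 - uinv x * y)"
    unfolding key[symmetric] by (meson f2u unit_cancel_right unit_mult(1))
  also have "1 - uinv x * y = uinv x * (x - y)" using unitD[OF xu] by (simp add: algebra_simps)
  also have "is_unit (uinv x * (x - y)) \<longleftrightarrow> is_unit (x - y)"
    using unit_sandwich[OF unit_uinv(1)[OF xu] unit_1, of "x - y"] by simp
  also have "x - y = - (y - x)" by simp
  finally show ?thesis unfolding unit_neg x_def y_def v_def w_def .
qed

lemma A_unit_iff:
  fixes a b c d :: "'a::ring_1"
  assumes u: "is_unit (a - 1)" "is_unit (b - a)" "is_unit (d - c)"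
  shows "is_unit ((d - 1) - (c - 1) * uinv (a - 1) * (b - 1)) \<longleftrightarrow>
         is_unit (uinv (d - c) * (c - 1) - uinv (b - a) * (a - 1))"
proof -
  have e: "(d - 1) - (c - 1) * uinv (a - 1) * (b - 1) =
     - ((d - c) * (uinv (d - c) * (c - 1) - uinv (b - a) * (a - 1)) * (uinv (a - 1) * (b - a)))"
    by (rule schurA) (simp_all add: unitD u)
  have wu: "is_unit (uinv (a - 1) * (b - a))" using u unit_uinv by (intro unit_mult) auto
  show ?thesis unfolding e unit_neg using unit_sandwich[OF u(3) wu] by simp
qed

theorem lemma7:
  fixes a b c d :: "'a::ring_1"
  defines "A \<equiv> matA a b c d"
  shows "((all_sub_inv A 1 \<and> all_sub_inv A 2) \<longleftrightarrow>
           (is_unit a \<and> is_unit b \<and> is_unit c \<and> is_unit d \<and>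
            is_unit (a - 1) \<and> is_unit (b - 1) \<and> is_unit (c - 1) \<and> is_unit (d - 1) \<and>
            is_unit (d - c) \<and> is_unit (d - b) \<and> is_unit (c - a) \<and> is_unit (b - a) \<and>
            is_unit (d * uinv b - c * uinv a)))
       \<and> ((all_sub_inv A 1 \<and> all_sub_inv A 2) \<longrightarrow>
           (mat_invertible 3 A \<longleftrightarrow>
              is_unit (uinv (d - c) * (c - 1) - uinv (b - a) * (a - 1)))
         \<and> (mat_invertible 3 (J2 A) \<longleftrightarrow>
              is_unit ((c - 1) * uinv (d - c) * d - (a - 1) * uinv (b - a) * b)))
       \<and> (A \<in> hat_S \<longleftrightarrow>
           (is_unit a \<and> is_unit b \<and> is_unit c \<and> is_unit d \<and>
            is_unit (a - 1) \<and> is_unit (b - 1) \<and> is_unit (c - 1) \<and> is_unit (d - 1) \<and>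
            is_unit (d - c) \<and> is_unit (d - b) \<and> is_unit (c - a) \<and> is_unit (b - a) \<and>
            is_unit (d * uinv b - c * uinv a) \<and>
            is_unit (uinv (d - c) * (c - 1) - uinv (b - a) * (a - 1)) \<and>
            is_unit ((c - 1) * uinv (d - c) * d - (a - 1) * uinv (b - a) * b)))"
proof -
  have s1: "all_sub_inv A 1 \<longleftrightarrow> is_unit a \<and> is_unit b \<and> is_unit c \<and> is_unit d"
    unfolding sub1 all3 A_def by (simp add: matA_simps[unfolded One_nat_def])
  have s2: "all_sub_inv A 2 \<longleftrightarrow> (is_unit (a - 1) \<and> is_unit (b - 1) \<and> is_unit (b - a) \<and>
      is_unit (c - 1) \<and> is_unit (d - 1) \<and> is_unit (d - c) \<and> is_unit (c - a) \<and> is_unit (d - b) \<and>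
      is_unit (d * uinv b - c * uinv a))"
    if "is_unit a" "is_unit b" "is_unit c" "is_unit d"
    unfolding sub2 A_def using that by (simp add: L2 conv12 matA_simps[unfolded One_nat_def])
  have P1: "(all_sub_inv A 1 \<and> all_sub_inv A 2) \<longleftrightarrow>
           (is_unit a \<and> is_unit b \<and> is_unit c \<and> is_unit d \<and>
            is_unit (a - 1) \<and> is_unit (b - 1) \<and> is_unit (c - 1) \<and> is_unit (d - 1) \<and>
            is_unit (d - c) \<and> is_unit (d - b) \<and> is_unit (c - a) \<and> is_unit (b - a) \<and>
            is_unit (d * uinv b - c * uinv a))"
    using s1 s2 by blast
  have r0: "\<And>j. j < 3 \<Longrightarrow> A 0 j = 1" "\<And>i. i < 3 \<Longrightarrow> A i 0 = 1"
  proof -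
    fix j :: nat assume "j < 3"
    hence "j = 0 \<or> j = 1 \<or> j = 2" by auto
    thus "A 0 j = 1" unfolding A_def by (elim disjE) simp_all
  next
    fix j :: nat assume "j < 3"
    hence "j = 0 \<or> j = 1 \<or> j = 2" by auto
    thus "A j 0 = 1" unfolding A_def by (elim disjE) simp_all
  qed
  have r0': "\<And>j. j < 3 \<Longrightarrow> J2 A 0 j = 1" "\<And>i. i < 3 \<Longrightarrow> J2 A i 0 = 1"
    using r0 unfolding J2_def by auto
  have P2: "(mat_invertible 3 A \<longleftrightarrow>
              is_unit (uinv (d - c) * (c - 1) - uinv (b - a) * (a - 1)))
         \<and> (mat_invertible 3 (J2 A) \<longleftrightarrow>
              is_unit ((c - 1) * uinv (d - c) * d - (a - 1) * uinv (b - a) * b))"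
    if h: "all_sub_inv A 1 \<and> all_sub_inv A 2"
  proof -
    have u: "is_unit a" "is_unit b" "is_unit c" "is_unit d" "is_unit (a - 1)" "is_unit (b - 1)"
      "is_unit (c - 1)" "is_unit (d - 1)" "is_unit (d - c)" "is_unit (b - a)"
      using h P1 by blast+
    have "mat_invertible 3 A \<longleftrightarrow> mat_invertible 2 (\<lambda>i j. A (i + 1) (j + 1) - 1)"
      by (rule L3) (use r0 in auto)
    also have "\<dots> \<longleftrightarrow> is_unit ((d - 1) - (c - 1) * uinv (a - 1) * (b - 1))"
      using L2[of "\<lambda>i j. A (i + 1) (j + 1) - 1"] u unfolding A_def by simp
    also have "\<dots> \<longleftrightarrow> is_unit (uinv (d - c) * (c - 1) - uinv (b - a) * (a - 1))"
      using A_unit_iff u by blast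
    finally have X: "mat_invertible 3 A \<longleftrightarrow> is_unit (uinv (d - c) * (c - 1) - uinv (b - a) * (a - 1))" .
    have pe: "uinv a - 1 = - (uinv a * (a - 1))" using unitD[OF u(1)] by (simp add: algebra_simps)
    have pu: "is_unit (uinv a - 1)" unfolding pe unit_neg using u unit_uinv by (intro unit_mult) auto
    have "mat_invertible 3 (J2 A) \<longleftrightarrow> mat_invertible 2 (\<lambda>i j. J2 A (i + 1) (j + 1) - 1)"
      by (rule L3) (use r0' in auto)
    also have "\<dots> \<longleftrightarrow> is_unit ((uinv d - 1) - (uinv b - 1) * uinv (uinv a - 1) * (uinv c - 1))"
      using L2[of "\<lambda>i j. J2 A (i + 1) (j + 1) - 1"] pu unfolding A_def J2_def by simp
    also have "\<dots> \<longleftrightarrow> is_unit ((c - 1) * uinv (d - c) * d - (a - 1) * uinv (b - a) * b)"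
      using J2_unit_iff u by blast
    finally show ?thesis using X by blast
  qed
  have hm: "A \<in> hat_M3" unfolding hat_M3_def using r0 by auto
  have P3: "A \<in> hat_S \<longleftrightarrow> all_sub_inv A 1 \<and> all_sub_inv A 2 \<and> mat_invertible 3 A \<and> mat_invertible 3 (J2 A)"
    unfolding hat_S_def S_set_def using hm by (simp add: sub3)
  show ?thesis using P1 P2 P3 by blast
qed

end
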